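(* Assume $F(x,v,u)=F_0(x,v)+F_1(x,v)u$ with $F_0:\mathbb{R}^n\times\mathbb{R}^n\to\mathbb{R}^n$ and $F_1:\mathbb{R}^n\times\mathbb{R}^n\to\mathbb{R}^{n\times m}$ globally Lipschitz continuous and continuously differentiable, and $\phi\in C([-\tau,0];\mathbb{R}^n)$. Let $(u_k)_{k\in\mathbb{N}}$ be bounded in $L^\infty(I;\mathbb{R}^m)$ with $u_k\rightharpoonup u$ in $L^1(I;\mathbb{R}^m)$. For each $k$ let $x_k\in C(I_\tau;\mathbb{R}^n)\cap W^{1,\infty}(I;\mathbb{R}^n)$ be the solution of $x_k'(t)=F(x_k(t),\mathrm{LIE}_k(x_{k,t}),u_k(t))$ for a.e. $t\in I$ with $x_k=\phi$ on $[-\tau,0]$. Then $x_k\to x$ in $C(I;\mathbb{R}^n)$, where $x$ is the solution of $x'(t)=F(x(t),\max x_t,u(t))$ for a.e. $t\in(0,T)$ with $x=\phi$ on $[-\tau,0]$.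
   Context: $n,m\ge1$, $T>0$, $\tau>0$, $I=[0,T]$, $I_\tau=[-\tau,T]$. For $x\in C(I_\tau;\mathbb{R}^n)$ and $t\in I$: $x_t(s)=x(t-s)$ for $s\in[0,\tau]$, $x_{k,t}:=(x_k)_t$, $\max x_t:=\max_{s\in[t-\tau,t]}x(s)$ and $\mathrm{LIE}_k(x_t):=\frac1k\log\big(\int_{t-\tau}^t\exp(k\,x(s))\,\mathrm{d}s\big)$, both componentwise. *)

theory Defs
  imports "HOL-Analysis.Analysis"
begin

definition C1_everywhere :: "('a::real_normed_vector \<Rightarrow> 'b::real_normed_vector) \<Rightarrow> bool" where
  "C1_everywhere f \<longleftrightarrow>
     (\<exists>D :: 'a \<Rightarrow> 'a \<Rightarrow>\<^sub>L 'b. (\<forall>z. (f has_derivative blinfun_apply (D z)) (at z)) \<and> continuous_on UNIV D)"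

definition globally_lipschitz :: "('a::metric_space \<Rightarrow> 'b::metric_space) \<Rightarrow> bool" where
  "globally_lipschitz f \<longleftrightarrow> (\<exists>L. L-lipschitz_on UNIV f)"

definition max_hist :: "real \<Rightarrow> (real \<Rightarrow> real^'n) \<Rightarrow> real \<Rightarrow> real^'n" where
  "max_hist \<tau> x t = (\<chi> i. (SUP s\<in>{t-\<tau>..t}. x s $ i))"

definition LIE :: "nat \<Rightarrow> real \<Rightarrow> (real \<Rightarrow> real^'n) \<Rightarrow> real \<Rightarrow> real^'n" where
  "LIE k \<tau> x t = (\<chi> i. (1 / real k) * ln (integral {t-\<tau>..t} (\<lambda>s. exp (real k * (x s $ i)))))"

text \<open>W^{1,\<infinity>} on the interval is rendered as Lipschitz continuity
(the continuous representative), and x' is the classical derivative, which exists a.e.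
and coincides with the weak derivative.\<close>
definition dde_solution ::
  "real \<Rightarrow> real \<Rightarrow> (real \<Rightarrow> real^'n) \<Rightarrow> ((real \<Rightarrow> real^'n) \<Rightarrow> real \<Rightarrow> real^'n) \<Rightarrow> (real \<Rightarrow> real^'n) \<Rightarrow> bool" where
  "dde_solution \<tau> T \<phi> G x \<longleftrightarrow>
     continuous_on {-\<tau>..T} x \<and>
     (\<exists>L. L-lipschitz_on {0..T} x) \<and>
     (\<forall>t\<in>{-\<tau>..0}. x t = \<phi> t) \<and>
     (AE t in lebesgue_on {0..T}. (x has_vector_derivative G x t) (at t))"

end

theory Submission
  imports Defs
begin

lemma ae_interior:
  fixes a b :: real
  assumes "AE t in lebesgue_on {a..b}. P t"
  shows "\<exists>N. negligible N \<and> (\<forall>t\<in>{a<..<b} - N. P t)"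
proof -
  have "AE t in lebesgue. t \<in> {a..b} \<longrightarrow> P t"
    using assms by (simp add: AE_restrict_space_iff)
  then obtain N where N: "negligible N" "{t. \<not> (t \<in> {a..b} \<longrightarrow> P t)} \<subseteq> N"
    unfolding eventually_ae_filter_negligible by blast
  show ?thesis
  proof (intro exI[of _ N] conjI ballI)
    fix t assume "t \<in> {a<..<b} - N"
    then show "P t" using N(2) by (metis (mono_tags, lifting) DiffD1 DiffD2 greaterThanLessThan_iff atLeastAtMost_iff less_eq_real_def mem_Collect_eq subsetD)
  qed (use N in auto)
qed

lemma aux_scale:
  fixes w d :: "'b::real_normed_vector"
  assumes "c > 0"
  shows "norm (c *\<^sub>R w - d) = norm (w - (1 / c) *\<^sub>R d) / norm (1 / c)"
proof -
  have "c *\<^sub>R w - d = c *\<^sub>R (w - (1 / c) *\<^sub>R d)" using assms by (simp add: scaleR_right_diff_distrib)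
  then have "norm (c *\<^sub>R w - d) = c * norm (w - (1 / c) *\<^sub>R d)" using assms by (simp only: norm_scaleR)
  then show ?thesis using assms by simp
qed

lemma seq_deriv:
  fixes f :: "real \<Rightarrow> 'b::real_normed_vector"
  assumes "(f has_vector_derivative d) (at t)"
  shows "(\<lambda>n. real (Suc n) *\<^sub>R (f (t + 1 / real (Suc n)) - f t)) \<longlonglongrightarrow> d"
proof -
  have "((\<lambda>y. norm ((f y - f t) - (y - t) *\<^sub>R d) / norm (y - t)) \<longlongrightarrow> 0) (at t)"
    using assms unfolding has_vector_derivative_def has_derivative_iff_norm by blast
  moreover have "filterlim (\<lambda>n. t + 1 / real (Suc n)) (at t) sequentially"
  proof -
    have "(\<lambda>n. t + 1 / real (Suc n)) \<longlonglongrightarrow> t + 0"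
      by (intro tendsto_intros LIMSEQ_inverse_real_of_nat[unfolded inverse_eq_divide]) 
    then show ?thesis
      by (intro filterlim_atI) auto
  qed
  ultimately have "(\<lambda>n. norm ((f (t + 1 / real (Suc n)) - f t) - (1 / real (Suc n)) *\<^sub>R d) / norm (1 / real (Suc n))) \<longlonglongrightarrow> 0"
    using filterlim_compose by fastforce
  moreover have eq: "norm (real (Suc n) *\<^sub>R (f (t + 1 / real (Suc n)) - f t) - d) = norm ((f (t + 1 / real (Suc n)) - f t) - (1 / real (Suc n)) *\<^sub>R d) / norm (1 / real (Suc n))" for n
    using aux_scale[of "real (Suc n)"] by (simp del: of_nat_Suc)
  ultimately have "(\<lambda>n. norm (real (Suc n) *\<^sub>R (f (t + 1 / real (Suc n)) - f t) - d)) \<longlonglongrightarrow> 0"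
    by (simp only: eq)
  then show ?thesis by (simp add: tendsto_norm_zero_iff LIM_zero_iff)
qed


lemma lip_ftc_base:
  fixes f :: "real \<Rightarrow> 'b::euclidean_space"
  assumes ab: "a < b" and lip: "L-lipschitz_on {a..b} f"
    and der: "AE t in lebesgue_on {a..b}. (f has_vector_derivative g t) (at t)"
  shows "integrable (lebesgue_on {a..b}) g \<and> integral\<^sup>L (lebesgue_on {a..b}) g = f b - f a"
proof -
  define cl where "cl t = max a (min b t)" for t
  define h where "h t = f (cl t)" for t
  have cl_in: "cl t \<in> {a..b}" for t using ab by (auto simp: cl_def)
  have L0: "0 \<le> L" using lip lipschitz_on_nonneg by blast
  have cl_lip: "dist (cl s) (cl t) \<le> dist s t" for s t by (auto simp: cl_def dist_real_def)
  have hlip: "L-lipschitz_on UNIV h"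
  proof (rule lipschitz_onI)
    fix s t :: real
    have "dist (h s) (h t) \<le> L * dist (cl s) (cl t)" unfolding h_def using lipschitz_onD[OF lip cl_in cl_in] .
    also have "\<dots> \<le> L * dist s t" using L0 cl_lip by (simp add: mult_left_mono)
    finally show "dist (h s) (h t) \<le> L * dist s t" .
  qed (rule L0)
  have hcont: "continuous_on UNIV h" using lipschitz_on_continuous_on[OF hlip] .
  have hcont2: "continuous_on UNIV (\<lambda>t. h (t + c))" for c
    using continuous_on_compose2[OF hcont continuous_on_add[OF continuous_on_id continuous_on_const]] by auto
  define D where "D n t = real (Suc n) *\<^sub>R (h (t + 1/real (Suc n)) - h t)" for n t
  have Dcont: "continuous_on UNIV (D n)" for n
    unfolding D_def by (intro continuous_intros hcont hcont2)
  have Dbound: "norm (D n t) \<le> L" for n t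
  proof -
    have "norm (h (t + 1/real (Suc n)) - h t) \<le> L * norm ((t + 1/real (Suc n)) - t)"
      by (rule lipschitz_on_normD[OF hlip]) auto
    then have "norm (h (t + 1/real (Suc n)) - h t) \<le> L / real (Suc n)" by simp
    moreover have "norm (D n t) = real (Suc n) * norm (h (t + 1/real (Suc n)) - h t)" unfolding D_def by simp
    moreover have "real (Suc n) * norm (h (t + 1/real (Suc n)) - h t) \<le> real (Suc n) * (L / real (Suc n))"
      using \<open>norm (h (t + 1/real (Suc n)) - h t) \<le> L / real (Suc n)\<close> by (rule mult_left_mono) simp
    ultimately show ?thesis by (simp del: of_nat_Suc)
  qed
  have Dmeas: "D n \<in> borel_measurable (lebesgue_on {a..b})" for n
    by (rule continuous_imp_measurable_on_sets_lebesgue[OF continuous_on_subset[OF Dcont]]) auto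
  have Dint: "integrable (lebesgue_on {a..b}) (D n)" for n
    by (rule continuous_imp_integrable_real[OF continuous_on_subset[OF Dcont]]) auto
  obtain N where N: "negligible N" "\<forall>t\<in>{a<..<b} - N. (f has_vector_derivative g t) (at t)"
    using ae_interior[OF der] by blast
  have lim: "(\<lambda>n. D n t) \<longlonglongrightarrow> g t" if t: "t \<in> {a<..<b} - N" for t
  proof -
    have "(h has_vector_derivative g t) (at t)"
    proof (rule has_vector_derivative_transform_within_open[OF _ open_greaterThanLessThan])
      show "(f has_vector_derivative g t) (at t)" using N t by blast
      show "t \<in> {a<..<b}" using t by auto
      show "f y = h y" if "y \<in> {a<..<b}" for y using that by (auto simp: h_def cl_def)
    qed
    then show ?thesis unfolding D_def by (rule seq_deriv)
  qed
  have NN: "negligible (N \<union> {a,b})" using N(1) by (simp add: negligible_Un)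
  have "g measurable_on {a..b}"
  proof (rule measurable_on_limit[of D _ "N \<union> {a,b}"])
    show "D n measurable_on {a..b}" for n by (rule measurable_on_iff_borel_measurable[THEN iffD2, OF _ Dmeas]) simp
    show "negligible (N \<union> {a,b})" by (rule NN)
    show "(\<lambda>n. D n x) \<longlonglongrightarrow> g x" if "x \<in> {a..b} - (N \<union> {a,b})" for x
      using that by (intro lim) auto
  qed
  then have gmeas: "g \<in> borel_measurable (lebesgue_on {a..b})"
    by (rule measurable_on_iff_borel_measurable[THEN iffD1, rotated]) simp
  have AElim: "AE t in lebesgue_on {a..b}. (\<lambda>n. D n t) \<longlonglongrightarrow> g t"
  proof (rule AE_I'[of "(N \<union> {a,b}) \<inter> {a..b}"])
    show "(N \<union> {a, b}) \<inter> {a..b} \<in> null_sets (lebesgue_on {a..b})"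
    proof -
      have "negligible ((N \<union> {a,b}) \<inter> {a..b})" using NN by (rule negligible_subset) auto
      then show ?thesis by (subst null_sets_restrict_space) (auto simp: negligible_iff_null_sets)
    qed
    show "{x \<in> space (lebesgue_on {a..b}). \<not> (\<lambda>n. D n x) \<longlonglongrightarrow> g x} \<subseteq> (N \<union> {a, b}) \<inter> {a..b}"
      using lim by (force simp: less_le)
  qed
  have wint: "integrable (lebesgue_on {a..b}) (\<lambda>t. L)"
    by (rule continuous_imp_integrable_real) (rule continuous_on_const)
  have gint: "integrable (lebesgue_on {a..b}) g"
    by (rule integrable_dominated_convergence[OF gmeas Dmeas wint AElim]) (simp add: Dbound)
  have limI: "(\<lambda>n. integral\<^sup>L (lebesgue_on {a..b}) (D n)) \<longlonglongrightarrow> integral\<^sup>L (lebesgue_on {a..b}) g"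
    by (rule integral_dominated_convergence[OF gmeas Dmeas wint AElim]) (simp add: Dbound)
  have hint: "h integrable_on {c..d}" for c d
    by (rule integrable_continuous_interval[OF continuous_on_subset[OF hcont]]) auto
  have hint2: "(\<lambda>t. h (t + c)) integrable_on {a..b}" for c
    by (rule integrable_continuous_interval[OF continuous_on_subset[OF hcont2]]) auto
  have eqI: "integral\<^sup>L (lebesgue_on {a..b}) (D n) = f b - real (Suc n) *\<^sub>R integral {a..a + 1/real (Suc n)} h"
    if qsmall: "1/real (Suc n) \<le> b - a" for n
  proof -
    define q where "q = 1/real (Suc n)"
    have q0: "q > 0" by (simp add: q_def)
    have "integral\<^sup>L (lebesgue_on {a..b}) (D n) = integral {a..b} (D n)"
      using has_integral_integral_lebesgue_on[OF Dint] by (metis integral_unique sets_lebesgue_on_refl lmeasurable_cbox fmeasurableD interval_cbox)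
    also have "\<dots> = real (Suc n) *\<^sub>R (integral {a..b} (\<lambda>t. h (t + q)) - integral {a..b} h)"
      unfolding D_def q_def by (simp add: integral_diff hint hint2 del: of_nat_Suc)
    also have "integral {a..b} (\<lambda>t. h (t + q)) = integral {a+q..b+q} h"
      using integral_shift_Icc_real[of a b h q] by (simp add: o_def add.commute)
    also have "integral {a+q..b+q} h = integral {a..b} h + integral {b..b+q} h - integral {a..a+q} h"
    proof -
      have "integral {a..a+q} h + integral {a+q..b+q} h = integral {a..b+q} h"
        using q0 qsmall ab by (intro Henstock_Kurzweil_Integration.integral_combine hint) (auto simp: q_def)
      moreover have "integral {a..b} h + integral {b..b+q} h = integral {a..b+q} h"
        using q0 ab by (intro Henstock_Kurzweil_Integration.integral_combine hint) auto
      ultimately show ?thesis by (simp add: algebra_simps)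
    qed
    also have "integral {b..b+q} h = q *\<^sub>R f b"
    proof -
      have "integral {b..b+q} h = integral {b..b+q} (\<lambda>_. f b)"
        using ab by (intro integral_cong) (auto simp: h_def cl_def)
      then show ?thesis using q0 by simp
    qed
    finally show ?thesis using q0 by (simp add: q_def algebra_simps del: of_nat_Suc)
  qed
  have lim2: "(\<lambda>n. real (Suc n) *\<^sub>R integral {a..a + 1/real (Suc n)} h) \<longlonglongrightarrow> f a"
  proof -
    have bnd: "norm (real (Suc n) *\<^sub>R integral {a..a + 1/real (Suc n)} h - f a) \<le> L / real (Suc n)" for n
    proof -
      define q where "q = 1/real (Suc n)"
      have q0: "q > 0" by (simp add: q_def)
      have "integral {a..a+q} (\<lambda>t. h t - f a) = integral {a..a+q} h - integral {a..a+q} (\<lambda>t. f a)"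
        by (rule Henstock_Kurzweil_Integration.integral_diff[OF hint integrable_continuous_interval[OF continuous_on_const]])
      then have "integral {a..a+q} h - q *\<^sub>R f a = integral {a..a+q} (\<lambda>t. h t - f a)"
        using q0 by simp
      moreover have "norm (integral {a..a+q} (\<lambda>t. h t - f a)) \<le> (L * q) * measure lborel {a..a+q}"
      proof (rule has_integral_bound_real[of _ "{}"])
        show "0 \<le> L * q" using L0 q0 by simp
        show "((\<lambda>t. h t - f a) has_integral integral {a..a+q} (\<lambda>t. h t - f a)) {a..a+q}"
          using hint by (intro integrable_integral integrable_diff) auto
        fix t assume t: "t \<in> {a..a+q} - {}"
        have "norm (h t - h a) \<le> L * norm (t - a)" by (rule lipschitz_on_normD[OF hlip]) auto
        also have "\<dots> \<le> L * q" using t L0 by (intro mult_left_mono) auto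
        finally show "norm (h t - f a) \<le> L * q" using ab by (simp add: h_def cl_def)
      qed simp
      ultimately have X: "norm (integral {a..a+q} h - q *\<^sub>R f a) \<le> L * q * q" using q0 by simp
      have E: "real (Suc n) *\<^sub>R integral {a..a+q} h - f a = real (Suc n) *\<^sub>R (integral {a..a+q} h - q *\<^sub>R f a)"
        by (simp add: q_def algebra_simps del: of_nat_Suc)
      have "norm (real (Suc n) *\<^sub>R integral {a..a+q} h - f a) = real (Suc n) * norm (integral {a..a+q} h - q *\<^sub>R f a)"
        by (simp only: E norm_scaleR abs_of_nat)
      also have "\<dots> \<le> real (Suc n) * (L*q*q)" by (rule mult_left_mono[OF X]) simp
      also have "\<dots> = L / real (Suc n)" by (simp add: q_def)
      finally show ?thesis unfolding q_def .
    qed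
    have "(\<lambda>n. L / real (Suc n)) \<longlonglongrightarrow> 0"
      using LIMSEQ_Suc[OF lim_const_over_n[of L]] .
    then have "(\<lambda>n. real (Suc n) *\<^sub>R integral {a..a + 1/real (Suc n)} h - f a) \<longlonglongrightarrow> 0"
      by (rule Lim_null_comparison[OF always_eventually, rotated]) (use bnd in blast)
    then show ?thesis by (rule LIM_zero_cancel)
  qed
  have "eventually (\<lambda>n. 1/real (Suc n) \<le> b - a) sequentially"
  proof -
    have "(\<lambda>n. 1/real (Suc n)) \<longlonglongrightarrow> 0" by (rule LIMSEQ_Suc[OF lim_const_over_n])
    then have "eventually (\<lambda>n. 1/real (Suc n) < b - a) sequentially"
      using ab by (simp add: order_tendsto_iff del: of_nat_Suc)
    then show ?thesis by eventually_elim simp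
  qed
  then have ev: "eventually (\<lambda>n. f b - real (Suc n) *\<^sub>R integral {a..a + 1/real (Suc n)} h = integral\<^sup>L (lebesgue_on {a..b}) (D n)) sequentially"
    by eventually_elim (rule eqI[symmetric])
  have "(\<lambda>n. integral\<^sup>L (lebesgue_on {a..b}) (D n)) \<longlonglongrightarrow> f b - f a"
    by (rule Lim_transform_eventually[OF tendsto_diff[OF tendsto_const lim2] ev])
  with limI have "integral\<^sup>L (lebesgue_on {a..b}) g = f b - f a" by (rule LIMSEQ_unique)
  with gint show ?thesis by blast
qed


lemma lip_ftc:
  fixes f :: "real \<Rightarrow> 'b::euclidean_space"
  assumes lip: "L-lipschitz_on {a..b} f"
    and der: "AE t in lebesgue_on {a..b}. (f has_vector_derivative g t) (at t)"
    and c: "c \<in> {a..b}"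
  shows "integrable (lebesgue_on {a..c}) g \<and> integral\<^sup>L (lebesgue_on {a..c}) g = f c - f a"
proof (cases "c = a")
  case True
  have "{a..a} \<in> null_sets lebesgue" by (simp add: negligible_iff_null_sets[symmetric])
  then have "has_bochner_integral (lebesgue_on {a..a}) g 0" by (rule has_bochner_integral_null)
  then show ?thesis using True by (simp add: has_bochner_integral_iff)
next
  case False
  then have ac: "a < c" using c by auto
  have lip': "L-lipschitz_on {a..c} f" by (rule lipschitz_on_subset[OF lip]) (use c in auto)
  have "AE t in lebesgue. t \<in> {a..b} \<longrightarrow> (f has_vector_derivative g t) (at t)"
    using der by (simp add: AE_restrict_space_iff)
  then have "AE t in lebesgue. t \<in> {a..c} \<longrightarrow> (f has_vector_derivative g t) (at t)"
    by eventually_elim (use c in auto)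
  then have der': "AE t in lebesgue_on {a..c}. (f has_vector_derivative g t) (at t)"
    by (simp add: AE_restrict_space_iff)
  show ?thesis by (rule lip_ftc_base[OF ac lip' der'])
qed

lemma pair_lip:
  fixes F :: "'a::real_normed_vector \<Rightarrow> 'b::real_normed_vector \<Rightarrow> 'c::real_normed_vector"
  assumes "globally_lipschitz (\<lambda>p. F (fst p) (snd p))"
  obtains L where "L \<ge> 0" "\<And>a b a' b'. norm (F a b - F a' b') \<le> L * (norm (a - a') + norm (b - b'))"
proof -
  obtain L where L: "L-lipschitz_on UNIV (\<lambda>p. F (fst p) (snd p))"
    using assms unfolding globally_lipschitz_def by blast
  have L0: "L \<ge> 0" using L lipschitz_on_nonneg by blast
  have "norm (F a b - F a' b') \<le> L * (norm (a - a') + norm (b - b'))" for a b a' b'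
  proof -
    have "norm (F a b - F a' b') \<le> L * norm ((a, b) - (a', b'))"
      using lipschitz_on_normD[OF L, of "(a,b)" "(a',b')"] by simp
    also have "norm ((a, b) - (a', b')) \<le> norm (a - a') + norm (b - b')"
      using norm_Pair_le[of "a - a'" "b - b'"] by simp
    then have "L * norm ((a, b) - (a', b')) \<le> L * (norm (a - a') + norm (b - b'))"
      by (rule mult_left_mono[OF _ L0])
    finally show ?thesis .
  qed
  then show ?thesis using that L0 by blast
qed

lemma norm_mv_le:
  fixes A :: "real^'m^'n" and v :: "real^'m"
  shows "norm (A *v v) \<le> real CARD('n) * norm A * norm v"
proof -
  have "norm (A *v v) \<le> (\<Sum>i\<in>UNIV. \<bar>(A *v v) $ i\<bar>)" by (rule norm_le_l1_cart)
  also have "\<dots> \<le> of_nat (card (UNIV::'n set)) * (norm A * norm v)"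
  proof (rule sum_bounded_above)
    fix i :: 'n
    have "(A *v v) $ i = inner (A $ i) v"
      by (simp add: matrix_vector_mult_def inner_vec_def)
    then have "\<bar>(A *v v) $ i\<bar> \<le> norm (A $ i) * norm v"
      using Cauchy_Schwarz_ineq2[of "A $ i" v] by simp
    also have "\<dots> \<le> norm A * norm v" by (intro mult_right_mono Finite_Cartesian_Product.norm_nth_le) auto
    finally show "\<bar>(A *v v) $ i\<bar> \<le> norm A * norm v" .
  qed
  finally show ?thesis by (simp add: mult.assoc)
qed

lemma exp_int_pos:
  fixes z :: "real \<Rightarrow> real"
  assumes "a < b" "continuous_on {a..b} z"
  shows "integral {a..b} (\<lambda>s. exp (z s)) > 0"
proof -
  obtain s0 where s0': "s0 \<in> {a..b}" "\<forall>s\<in>{a..b}. z s0 \<le> z s"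
    using continuous_attains_inf[of "{a..b}" z] assms by auto
  then have s0: "s0 \<in> {a..b}" "\<And>s. s \<in> {a..b} \<Longrightarrow> exp (z s0) \<le> exp (z s)" by auto
  have "integral {a..b} (\<lambda>s. exp (z s0)) \<le> integral {a..b} (\<lambda>s. exp (z s))"
    using s0 assms by (intro integral_le integrable_continuous_interval continuous_intros) auto
  moreover have "integral {a..b} (\<lambda>s. exp (z s0)) = (b - a) * exp (z s0)" using assms by simp
  moreover have "(b - a) * exp (z s0) > 0" using assms by simp
  ultimately show ?thesis by linarith
qed

lemma LIE_le_aux:
  fixes y z :: "real \<Rightarrow> real^'n"
  assumes k: "k \<ge> 1" and tau: "\<tau> > 0" and cy: "continuous_on {t-\<tau>..t} y" and cz: "continuous_on {t-\<tau>..t} z"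
    and bd: "\<And>s. s \<in> {t-\<tau>..t} \<Longrightarrow> y s $ i \<le> z s $ i + c"
  shows "LIE k \<tau> y t $ i \<le> LIE k \<tau> z t $ i + c"
proof -
  define Iy where "Iy = integral {t-\<tau>..t} (\<lambda>s. exp (real k * (y s $ i)))"
  define Iz where "Iz = integral {t-\<tau>..t} (\<lambda>s. exp (real k * (z s $ i)))"
  have k0: "real k > 0" using k by simp
  have Iy0: "Iy > 0" unfolding Iy_def using tau cy by (intro exp_int_pos continuous_intros) auto
  have Iz0: "Iz > 0" unfolding Iz_def using tau cz by (intro exp_int_pos continuous_intros) auto
  have "Iy \<le> integral {t-\<tau>..t} (\<lambda>s. exp (real k * c) * exp (real k * (z s $ i)))"
    unfolding Iy_def
  proof (rule integral_le)
    show "(\<lambda>s. exp (real k * (y s $ i))) integrable_on {t-\<tau>..t}"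
      using cy by (intro integrable_continuous_interval continuous_intros)
    show "(\<lambda>s. exp (real k * c) * exp (real k * (z s $ i))) integrable_on {t-\<tau>..t}"
      using cz by (intro integrable_continuous_interval continuous_intros)
    fix s assume "s \<in> {t-\<tau>..t}"
    then have "real k * (y s $ i) \<le> real k * c + real k * (z s $ i)"
      using bd k0 by (metis add.commute distrib_left mult_le_cancel_left_pos)
    then show "exp (real k * (y s $ i)) \<le> exp (real k * c) * exp (real k * (z s $ i))"
      by (simp add: exp_add[symmetric])
  qed
  also have "\<dots> = exp (real k * c) * Iz" unfolding Iz_def by simp
  finally have "ln Iy \<le> ln (exp (real k * c) * Iz)" using Iy0 by (intro ln_mono) auto
  also have "\<dots> = real k * c + ln Iz" using Iz0 by (simp add: ln_mult)
  finally have "ln Iy / real k \<le> c + ln Iz / real k" using k0 by (simp add: field_simps)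
  then show ?thesis unfolding LIE_def Iy_def Iz_def by simp
qed

lemma LIE_lip:
  fixes y z :: "real \<Rightarrow> real^'n"
  assumes k: "k \<ge> 1" and tau: "\<tau> > 0" and cy: "continuous_on {t-\<tau>..t} y" and cz: "continuous_on {t-\<tau>..t} z"
    and bd: "\<And>s. s \<in> {t-\<tau>..t} \<Longrightarrow> norm (y s - z s) \<le> c"
  shows "norm (LIE k \<tau> y t - LIE k \<tau> z t) \<le> real CARD('n) * c"
proof -
  have comp: "\<bar>LIE k \<tau> y t $ i - LIE k \<tau> z t $ i\<bar> \<le> c" for i
  proof -
    have b: "\<bar>y s $ i - z s $ i\<bar> \<le> c" if "s \<in> {t-\<tau>..t}" for s
      using bd[OF that] component_le_norm_cart[of "y s - z s" i] by simp
    have "LIE k \<tau> y t $ i \<le> LIE k \<tau> z t $ i + c"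
      by (rule LIE_le_aux[OF k tau cy cz]) (use b in force)
    moreover have "LIE k \<tau> z t $ i \<le> LIE k \<tau> y t $ i + c"
      by (rule LIE_le_aux[OF k tau cz cy]) (use b in force)
    ultimately show ?thesis by linarith
  qed
  have "norm (LIE k \<tau> y t - LIE k \<tau> z t) \<le> (\<Sum>i\<in>UNIV. \<bar>(LIE k \<tau> y t - LIE k \<tau> z t) $ i\<bar>)"
    by (rule norm_le_l1_cart)
  also have "\<dots> \<le> of_nat (card (UNIV::'n set)) * c"
    by (rule sum_bounded_above) (use comp in simp)
  finally show ?thesis by simp
qed

lemma win_sup:
  fixes w :: "real \<Rightarrow> real"
  assumes "\<tau> > 0" "continuous_on {t-\<tau>..t} w"
  shows "\<exists>s0\<in>{t-\<tau>..t}. (SUP s\<in>{t-\<tau>..t}. w s) = w s0 \<and> (\<forall>s\<in>{t-\<tau>..t}. w s \<le> w s0)"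
proof -
  obtain s0 where s0: "s0 \<in> {t-\<tau>..t}" "\<forall>s\<in>{t-\<tau>..t}. w s \<le> w s0"
    using continuous_attains_sup[of "{t-\<tau>..t}" w] assms by auto
  then have "(SUP s\<in>{t-\<tau>..t}. w s) = w s0" by (intro cSup_eq_maximum) auto
  then show ?thesis using s0 by blast
qed

lemma win_shift:
  fixes w :: "real \<Rightarrow> real"
  assumes tau: "\<tau> > 0" and cw: "continuous_on {-\<tau>..T} w"
    and t: "t \<in> {0..T}" and t': "t' \<in> {0..T}" and d: "\<bar>t - t'\<bar> < d"
    and uc: "\<And>s s'. s \<in> {-\<tau>..T} \<Longrightarrow> s' \<in> {-\<tau>..T} \<Longrightarrow> \<bar>s - s'\<bar> < d \<Longrightarrow> \<bar>w s - w s'\<bar> \<le> e"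
  shows "(SUP s\<in>{t-\<tau>..t}. w s) \<le> (SUP s\<in>{t'-\<tau>..t'}. w s) + e"
proof -
  have sub: "{u-\<tau>..u} \<subseteq> {-\<tau>..T}" if "u \<in> {0..T}" for u using that by auto
  obtain s0 where s0: "s0 \<in> {t-\<tau>..t}" "(SUP s\<in>{t-\<tau>..t}. w s) = w s0"
    using win_sup[OF tau continuous_on_subset[OF cw sub[OF t]]] by blast
  obtain s1 where s1: "s1 \<in> {t'-\<tau>..t'}" "(SUP s\<in>{t'-\<tau>..t'}. w s) = w s1" "\<forall>s\<in>{t'-\<tau>..t'}. w s \<le> w s1"
    using win_sup[OF tau continuous_on_subset[OF cw sub[OF t']]] by blast
  define s' where "s' = s0 + (t' - t)"
  have s'in: "s' \<in> {t'-\<tau>..t'}" using s0(1) by (auto simp: s'_def)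
  have i1: "s0 \<in> {-\<tau>..T}" using s0(1) sub[OF t] by blast
  have i2: "s' \<in> {-\<tau>..T}" using s'in sub[OF t'] by blast
  have "\<bar>s0 - s'\<bar> < d" using d by (simp add: s'_def abs_minus_commute)
  then have "\<bar>w s0 - w s'\<bar> \<le> e" by (rule uc[OF i1 i2])
  then have "w s0 \<le> w s' + e" by linarith
  also have "w s' \<le> w s1" using s1(3) s'in by blast
  finally show ?thesis using s0(2) s1(2) by simp
qed

lemma max_hist_cont:
  fixes x :: "real \<Rightarrow> real^'n"
  assumes tau: "\<tau> > 0" and cx: "continuous_on {-\<tau>..T} x"
  shows "continuous_on {0..T} (max_hist \<tau> x)"
  unfolding continuous_on_iff
proof (intro ballI allI impI)
  fix t e :: real assume t: "t \<in> {0..T}" and e: "e > 0"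
  define e' where "e' = e / (2 * real CARD('n))"
  have e': "e' > 0" using e by (simp add: e'_def)
  have "uniformly_continuous_on {-\<tau>..T} x" by (rule compact_uniformly_continuous[OF cx]) simp
  then obtain d where d0: "d > 0" and d1: "\<forall>s\<in>{-\<tau>..T}. \<forall>s'\<in>{-\<tau>..T}. dist s' s < d \<longrightarrow> dist (x s') (x s) < e'"
    unfolding uniformly_continuous_on_def using e' by blast
  have d: "d > 0" "\<And>s s'. s \<in> {-\<tau>..T} \<Longrightarrow> s' \<in> {-\<tau>..T} \<Longrightarrow> dist s' s < d \<Longrightarrow> dist (x s') (x s) < e'"
    using d0 d1 by auto
  show "\<exists>d>0. \<forall>t'\<in>{0..T}. dist t' t < d \<longrightarrow> dist (max_hist \<tau> x t') (max_hist \<tau> x t) < e"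
  proof (intro exI[of _ d] conjI ballI impI)
    show "d > 0" by (rule d(1))
    fix t' assume t': "t' \<in> {0..T}" and dt: "dist t' t < d"
    have comp: "\<bar>max_hist \<tau> x t' $ i - max_hist \<tau> x t $ i\<bar> \<le> e'" for i
    proof -
      have cw: "continuous_on {-\<tau>..T} (\<lambda>s. x s $ i)" using cx by (intro continuous_intros)
      have uc: "\<bar>x s $ i - x s' $ i\<bar> \<le> e'" if "s \<in> {-\<tau>..T}" "s' \<in> {-\<tau>..T}" "\<bar>s - s'\<bar> < d" for s s'
      proof -
        have "dist (x s) (x s') < e'" using d(2)[of s' s] that by (simp add: dist_real_def)
        then show ?thesis using component_le_norm_cart[of "x s - x s'" i] by (simp add: dist_norm)
      qed
      have "(SUP s\<in>{t'-\<tau>..t'}. x s $ i) \<le> (SUP s\<in>{t-\<tau>..t}. x s $ i) + e'"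
        by (rule win_shift[OF tau cw t' t _ uc]) (use dt in \<open>auto simp: dist_real_def\<close>)
      moreover have "(SUP s\<in>{t-\<tau>..t}. x s $ i) \<le> (SUP s\<in>{t'-\<tau>..t'}. x s $ i) + e'"
        by (rule win_shift[OF tau cw t t' _ uc]) (use dt in \<open>auto simp: dist_real_def\<close>)
      ultimately show ?thesis unfolding max_hist_def by simp
    qed
    have "dist (max_hist \<tau> x t') (max_hist \<tau> x t) \<le> (\<Sum>i\<in>UNIV. \<bar>(max_hist \<tau> x t' - max_hist \<tau> x t) $ i\<bar>)"
      unfolding dist_norm by (rule norm_le_l1_cart)
    also have "\<dots> \<le> of_nat (card (UNIV::'n set)) * e'"
      by (rule sum_bounded_above) (use comp in simp)
    also have "\<dots> < e" using e by (simp add: e'_def)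
    finally show "dist (max_hist \<tau> x t') (max_hist \<tau> x t) < e" .
  qed
qed

lemma equi_unif:
  fixes r :: "nat \<Rightarrow> real \<Rightarrow> 'a::real_normed_vector" and V :: "real \<Rightarrow> real"
  assumes cV: "continuous_on {a..b} V"
    and eq: "\<And>k s t. s \<in> {a..b} \<Longrightarrow> t \<in> {a..b} \<Longrightarrow> norm (r k s - r k t) \<le> \<bar>V s - V t\<bar>"
    and pt: "\<And>t. t \<in> {a..b} \<Longrightarrow> (\<lambda>k. r k t) \<longlonglongrightarrow> 0"
    and e: "\<epsilon> > 0"
  shows "\<exists>K. \<forall>k\<ge>K. \<forall>t\<in>{a..b}. norm (r k t) \<le> \<epsilon>"
proof -
  have "uniformly_continuous_on {a..b} V" by (rule compact_uniformly_continuous[OF cV]) simp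
  moreover have e2: "\<epsilon>/2 > 0" using e by simp
  ultimately obtain d where d0: "d > 0" and d1: "\<forall>s\<in>{a..b}. \<forall>s'\<in>{a..b}. dist s' s < d \<longrightarrow> dist (V s') (V s) < \<epsilon>/2"
    unfolding uniformly_continuous_on_def by blast
  have d: "d > 0" "\<And>s s'. s \<in> {a..b} \<Longrightarrow> s' \<in> {a..b} \<Longrightarrow> dist s' s < d \<Longrightarrow> dist (V s') (V s) < \<epsilon>/2"
    using d0 d1 by auto
  have cov: "{a..b} \<subseteq> (\<Union>c\<in>{a..b}. ball c d)" using d0 by auto
  obtain C where C: "C \<subseteq> {a..b}" "finite C" "{a..b} \<subseteq> (\<Union>c\<in>C. ball c d)"
    using compactE_image[OF compact_Icc _ cov] by blast
  have "eventually (\<lambda>k. \<forall>c\<in>C. norm (r k c) < \<epsilon>/2) sequentially"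
  proof (rule eventually_ball_finite[OF C(2)], rule ballI)
    fix c assume "c \<in> C"
    then have "c \<in> {a..b}" using C(1) by blast
    then have "(\<lambda>k. norm (r k c)) \<longlonglongrightarrow> 0" using pt tendsto_norm_zero by blast
    then show "eventually (\<lambda>k. norm (r k c) < \<epsilon>/2) sequentially" using e2 order_tendstoD(2) by blast
  qed
  then obtain K where K: "\<And>k c. k \<ge> K \<Longrightarrow> c \<in> C \<Longrightarrow> norm (r k c) < \<epsilon>/2"
    unfolding eventually_sequentially by blast
  have "norm (r k t) \<le> \<epsilon>" if k: "k \<ge> K" and t: "t \<in> {a..b}" for k t
  proof -
    obtain c where c: "c \<in> C" "t \<in> ball c d" using C(3) t by blast
    have cab: "c \<in> {a..b}" using c C(1) by blast
    have "norm (r k t) \<le> norm (r k c) + norm (r k t - r k c)" by (rule norm_triangle_sub)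
    also have "norm (r k t - r k c) \<le> \<bar>V t - V c\<bar>" by (rule eq[OF t cab])
    also have "\<bar>V t - V c\<bar> < \<epsilon>/2" using d(2)[OF cab t] c(2) by (simp add: dist_real_def dist_commute)
    finally show ?thesis using K[OF k c(1)] by simp
  qed
  then show ?thesis by blast
qed

lemma ln_div_bounds:
  fixes I a lt le e k :: real
  assumes k: "k > 0" and up: "ln I \<le> lt + k * a" and lo: "le + k * (a - e/2) \<le> ln I"
    and blt: "\<bar>lt\<bar> \<le> k * e" and ble: "\<bar>le\<bar> \<le> k * e / 2"
  shows "\<bar>(1 / k) * ln I - a\<bar> \<le> e"
proof -
  have "ln I \<le> k * e + k * a" using up blt by linarith
  then have u: "ln I / k \<le> e + a" using k by (simp add: field_simps)
  have "k * (a - e) \<le> ln I" using lo ble by (simp add: algebra_simps)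
  then have l: "a - e \<le> ln I / k" using k by (simp add: field_simps)
  show ?thesis using u l by simp
qed

lemma LIE_max:
  fixes x :: "real \<Rightarrow> real^'n"
  assumes tau: "\<tau> > 0" and cx: "continuous_on {-\<tau>..T} x" and e: "\<epsilon> > 0"
  shows "\<exists>K. \<forall>k\<ge>K. \<forall>t\<in>{0..T}. norm (LIE k \<tau> x t - max_hist \<tau> x t) \<le> \<epsilon>"
proof -
  define e' where "e' = \<epsilon> / real CARD('n)"
  have e': "e' > 0" using e by (simp add: e'_def)
  have "uniformly_continuous_on {-\<tau>..T} x" by (rule compact_uniformly_continuous[OF cx]) simp
  moreover have e2: "e'/2 > 0" using e' by simp
  ultimately obtain d where d0: "d > 0" and d1: "\<forall>s\<in>{-\<tau>..T}. \<forall>s'\<in>{-\<tau>..T}. dist s' s < d \<longrightarrow> dist (x s') (x s) < e'/2"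
    unfolding uniformly_continuous_on_def by blast
  define \<eta> where "\<eta> = min (d/2) (\<tau>/2)"
  have eta0: "\<eta> > 0" using d0 tau by (simp add: \<eta>_def)
  have etad: "\<eta> < d" "\<eta> \<le> \<tau>/2" using d0 tau by (auto simp: \<eta>_def)
  define X where "X = (\<bar>ln \<tau>\<bar> + \<bar>ln \<eta>\<bar>) * 2 / e'"
  define K where "K = nat \<lceil>X\<rceil> + 1"
  have main: "\<bar>LIE k \<tau> x t $ i - max_hist \<tau> x t $ i\<bar> \<le> e'" if k: "k \<ge> K" and t: "t \<in> {0..T}" for k t i
  proof -
    have k1: "k \<ge> 1" using k by (simp add: K_def)
    have k0: "real k > 0" using k1 by simp
    have "X \<le> real (nat \<lceil>X\<rceil>)" by (rule real_nat_ceiling_ge)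
    moreover have "real (nat \<lceil>X\<rceil>) \<le> real k" using k unfolding K_def by linarith
    ultimately have "real k \<ge> (\<bar>ln \<tau>\<bar> + \<bar>ln \<eta>\<bar>) * 2 / e'" unfolding X_def by linarith
    then have kk: "(\<bar>ln \<tau>\<bar> + \<bar>ln \<eta>\<bar>) * 2 \<le> real k * e'" using e' by (simp add: field_simps)
    have sub: "{t-\<tau>..t} \<subseteq> {-\<tau>..T}" using t by auto
    define w where "w s = x s $ i" for s
    have cw: "continuous_on {t-\<tau>..t} w" unfolding w_def
      using continuous_on_subset[OF cx sub] by (intro continuous_intros)
    obtain s0 where s0: "s0 \<in> {t-\<tau>..t}" "(SUP s\<in>{t-\<tau>..t}. w s) = w s0" "\<forall>s\<in>{t-\<tau>..t}. w s \<le> w s0"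
      using win_sup[OF tau cw] by blast
    define a where "a = w s0"
    have Ma: "max_hist \<tau> x t $ i = a" unfolding max_hist_def a_def using s0(2) by (simp add: w_def)
    define I where "I = integral {t-\<tau>..t} (\<lambda>s. exp (real k * w s))"
    have intg: "(\<lambda>s. exp (real k * w s)) integrable_on {c..d'}" if "{c..d'} \<subseteq> {t-\<tau>..t}" for c d'
      using continuous_on_subset[OF cw that] by (intro integrable_continuous_interval continuous_intros)
    have I0: "I > 0" unfolding I_def using tau cw by (intro exp_int_pos continuous_intros) auto
    have "I \<le> integral {t-\<tau>..t} (\<lambda>s. exp (real k * a))"
      unfolding I_def
    proof (rule integral_le[OF intg])
      show "(\<lambda>s. exp (real k * a)) integrable_on {t-\<tau>..t}" by (intro integrable_continuous_interval continuous_intros)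
      fix s assume "s \<in> {t-\<tau>..t}"
      then show "exp (real k * w s) \<le> exp (real k * a)" using s0(3) k0 by (simp add: a_def)
    qed simp
    also have "\<dots> = \<tau> * exp (real k * a)" using tau by simp
    finally have "ln I \<le> ln (\<tau> * exp (real k * a))" using I0 by (intro ln_mono) auto
    then have up: "ln I \<le> ln \<tau> + real k * a" using tau by (simp add: ln_mult)
    define c where "c = (if t - \<tau> \<le> s0 - \<eta> then s0 - \<eta> else s0)"
    have csub: "{c..c+\<eta>} \<subseteq> {t-\<tau>..t}" using s0(1) etad by (auto simp: c_def)
    have cnear: "\<bar>s - s0\<bar> < d" if "s \<in> {c..c+\<eta>}" for s using that etad by (auto simp: c_def split: if_splits)
    have "integral {c..c+\<eta>} (\<lambda>s. exp (real k * (a - e'/2))) \<le> integral {c..c+\<eta>} (\<lambda>s. exp (real k * w s))"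
    proof (rule integral_le)
      show "(\<lambda>s. exp (real k * (a - e'/2))) integrable_on {c..c+\<eta>}" by (intro integrable_continuous_interval continuous_intros)
      show "(\<lambda>s. exp (real k * w s)) integrable_on {c..c+\<eta>}" by (rule intg[OF csub])
      fix s assume s: "s \<in> {c..c+\<eta>}"
      have "s \<in> {-\<tau>..T}" "s0 \<in> {-\<tau>..T}" using s csub sub s0(1) by blast+
      then have "dist (x s) (x s0) < e'/2" using d1 cnear[OF s] by (simp add: dist_real_def)
      then have "\<bar>w s - w s0\<bar> < e'/2" unfolding w_def
        using component_le_norm_cart[of "x s - x s0" i] by (simp add: dist_norm)
      then have "a - e'/2 \<le> w s" unfolding a_def by linarith
      then show "exp (real k * (a - e'/2)) \<le> exp (real k * w s)" using k0 by simp
    qed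
    also have "\<dots> \<le> I" unfolding I_def
      by (rule integral_subset_le[OF csub intg[OF csub] intg]) auto
    finally have "\<eta> * exp (real k * (a - e'/2)) \<le> I" using eta0 by simp
    then have "ln (\<eta> * exp (real k * (a - e'/2))) \<le> ln I" using eta0 by (intro ln_mono) auto
    then have lo: "ln \<eta> + real k * (a - e'/2) \<le> ln I" using eta0 by (simp add: ln_mult)
    have "\<bar>(1 / real k) * ln I - a\<bar> \<le> e'"
      by (rule ln_div_bounds[OF k0 up lo]) (use kk in auto)
    then show ?thesis unfolding LIE_def Ma I_def w_def by simp
  qed
  show ?thesis
  proof (intro exI[of _ K] allI impI ballI)
    fix k t assume k: "k \<ge> K" and t: "t \<in> {0..T}"
    have "norm (LIE k \<tau> x t - max_hist \<tau> x t) \<le> (\<Sum>i\<in>UNIV. \<bar>(LIE k \<tau> x t - max_hist \<tau> x t) $ i\<bar>)"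
      by (rule norm_le_l1_cart)
    also have "\<dots> \<le> of_nat (card (UNIV::'n set)) * e'"
      by (rule sum_bounded_above) (use main[OF k t] in simp)
    also have "\<dots> = \<epsilon>" by (simp add: e'_def)
    finally show "norm (LIE k \<tau> x t - max_hist \<tau> x t) \<le> \<epsilon>" .
  qed
qed

lemma bilinear_mv: "bilinear (\<lambda>(A::real^'m^'n) (v::real^'m). A *v v)"
  unfolding bilinear_def
proof (intro conjI allI)
  fix A :: "real^'m^'n" show "linear (\<lambda>v. A *v v)" by simp
next
  fix v :: "real^'m" show "linear (\<lambda>A::real^'m^'n. A *v v)"
    by (rule linearI) (simp_all add: matrix_vector_mult_add_rdistrib scaleR_matrix_vector_assoc)
qed

lemma ae_sub:
  assumes "AE s in lebesgue_on {a..b}. P s" "{c..d} \<subseteq> {a..b}"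
  shows "AE s in lebesgue_on {c..d::real}. P s"
proof -
  have "AE s in lebesgue. s \<in> {a..b} \<longrightarrow> P s" using assms(1) by (simp add: AE_restrict_space_iff)
  then have "AE s in lebesgue. s \<in> {c..d} \<longrightarrow> P s" by eventually_elim (use assms(2) in auto)
  then show ?thesis by (simp add: AE_restrict_space_iff)
qed

lemma restrict_int:
  fixes h :: "real \<Rightarrow> real"
  assumes "t \<in> {0..T}"
  shows "integral\<^sup>L (lebesgue_on {0..t}) h = integral\<^sup>L (lebesgue_on {0..T}) (\<lambda>s. indicator {0..t} s * h s)"
proof -
  have "integral\<^sup>L (lebesgue_on {0..t}) h = integral\<^sup>L lebesgue (\<lambda>s. indicator {0..t} s *\<^sub>R h s)"
    by (rule integral_restrict_space) simp
  also have "\<dots> = integral\<^sup>L lebesgue (\<lambda>s. indicator {0..T} s *\<^sub>R (indicator {0..t} s * h s))"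
    using assms by (intro Bochner_Integration.integral_cong) (auto simp: indicator_def)
  also have "\<dots> = integral\<^sup>L (lebesgue_on {0..T}) (\<lambda>s. indicator {0..t} s * h s)"
    by (rule integral_restrict_space[symmetric]) simp
  finally show ?thesis .
qed

lemma ind_meas:
  assumes "t \<in> {0..T}"
  shows "(indicator {0..t} :: real \<Rightarrow> real) \<in> borel_measurable (lebesgue_on {0..T})"
proof (rule borel_measurable_indicator)
  show "{0..t} \<in> sets (lebesgue_on {0..T})"
    using assms by (subst sets_restrict_space_iff) auto
qed

lemma mv_component: "((A::real^'m^'n) *v w) $ i = inner w (A $ i)"
  by (simp add: matrix_vector_mult_def inner_vec_def mult.commute)

lemma icc_sets: "{a..b::real} \<in> sets lebesgue" by simp

lemma bochner_hk:
  fixes f :: "real \<Rightarrow> 'b::euclidean_space"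
  assumes "integrable (lebesgue_on {a..b}) f"
  shows "integral\<^sup>L (lebesgue_on {a..b}) f = integral {a..b} f"
  using has_integral_integral_lebesgue_on[OF assms icc_sets] by (rule integral_unique[symmetric])

lemma final_arith:
  fixes lam C W X E R :: real
  assumes lam: "lam > 0" and C: "C \<ge> 0" "2 * C \<le> lam" and W: "W \<ge> 0" and X: "X \<ge> 1"
    and E: "E = W * X" and EB: "E \<le> C * W * (X - 1) / lam + R"
  shows "W \<le> 2 * R"
proof -
  have q: "C / lam \<le> 1/2" using lam C by (simp add: field_simps)
  have wx: "W * (X - 1) \<ge> 0" using W X by simp
  have "C * W * (X - 1) / lam = (C / lam) * (W * (X - 1))" by simp
  also have "\<dots> \<le> (1/2) * (W * (X - 1))" by (rule mult_right_mono[OF q wx])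
  finally have "W * X \<le> (1/2) * (W * (X - 1)) + R" using E EB by linarith
  moreover have "(1/2) * (W * (X - 1)) = (W * X) / 2 - W / 2" by (simp add: field_simps)
  ultimately have "W * X \<le> 2 * R" using W by linarith
  moreover have "W \<le> W * X" using W X by (simp add: mult_le_cancel_left1)
  ultimately show ?thesis by linarith
qed

theorem lemma5p1:
  fixes T \<tau> :: real
    and F0 :: "real^'n \<Rightarrow> real^'n \<Rightarrow> real^'n"
    and F1 :: "real^'n \<Rightarrow> real^'n \<Rightarrow> real^'m^'n"
    and \<phi> :: "real \<Rightarrow> real^'n"
    and uk :: "nat \<Rightarrow> real \<Rightarrow> real^'m"
    and u :: "real \<Rightarrow> real^'m"
    and xk :: "nat \<Rightarrow> real \<Rightarrow> real^'n"
    and x :: "real \<Rightarrow> real^'n"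
  assumes T_pos: "T > 0" and tau_pos: "\<tau> > 0"
    and F0_lip: "globally_lipschitz (\<lambda>p. F0 (fst p) (snd p))"
    and F1_lip: "globally_lipschitz (\<lambda>p. F1 (fst p) (snd p))"
    and F0_C1: "C1_everywhere (\<lambda>p. F0 (fst p) (snd p))"
    and F1_C1: "C1_everywhere (\<lambda>p. F1 (fst p) (snd p))"
    and phi_cont: "continuous_on {-\<tau>..0} \<phi>"
    and uk_meas: "\<And>k. uk k \<in> borel_measurable (lebesgue_on {0..T})"
    and uk_bdd: "\<exists>M. \<forall>k. AE t in lebesgue_on {0..T}. norm (uk k t) \<le> M"
    and u_int: "integrable (lebesgue_on {0..T}) u"
    and weak: "\<And>g :: real \<Rightarrow> real^'m.
                 g \<in> borel_measurable (lebesgue_on {0..T}) \<Longrightarrow>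
                 (\<exists>B. AE t in lebesgue_on {0..T}. norm (g t) \<le> B) \<Longrightarrow>
                 (\<lambda>k. integral\<^sup>L (lebesgue_on {0..T}) (\<lambda>t. uk k t \<bullet> g t))
                   \<longlonglongrightarrow> integral\<^sup>L (lebesgue_on {0..T}) (\<lambda>t. u t \<bullet> g t)"
    and xk_sol: "\<And>k. k \<ge> 1 \<Longrightarrow> dde_solution \<tau> T \<phi>
                   (\<lambda>y t. F0 (y t) (LIE k \<tau> y t) + F1 (y t) (LIE k \<tau> y t) *v uk k t) (xk k)"
    and x_sol: "dde_solution \<tau> T \<phi>
                   (\<lambda>y t. F0 (y t) (max_hist \<tau> y t) + F1 (y t) (max_hist \<tau> y t) *v u t) x"
  shows "uniform_limit {0..T} xk x sequentially"
proof -
  note xs = x_sol[unfolded dde_solution_def]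
  have cx: "continuous_on {-\<tau>..T} x" using xs by blast
  have xphi: "\<And>t. t \<in> {-\<tau>..0} \<Longrightarrow> x t = \<phi> t" using xs by blast
  obtain Lx where Lx: "Lx-lipschitz_on {0..T} x" using xs by blast
  have derx: "AE t in lebesgue_on {0..T}. (x has_vector_derivative (F0 (x t) (max_hist \<tau> x t) + F1 (x t) (max_hist \<tau> x t) *v u t)) (at t)"
    using xs by blast
  obtain L0 where L0: "L0 \<ge> 0" "\<And>a b a' b'. norm (F0 a b - F0 a' b') \<le> L0 * (norm (a - a') + norm (b - b'))"
    using pair_lip[OF F0_lip] by blast
  obtain L1 where L1: "L1 \<ge> 0" "\<And>a b a' b'. norm (F1 a b - F1 a' b') \<le> L1 * (norm (a - a') + norm (b - b'))"
    using pair_lip[OF F1_lip] by blast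
  obtain M0 where M0: "\<And>k. AE t in lebesgue_on {0..T}. norm (uk k t) \<le> M0" using uk_bdd by blast
  define M where "M = \<bar>M0\<bar>"
  have M1: "AE t in lebesgue_on {0..T}. norm (uk k t) \<le> M" for k
    using M0[of k] by eventually_elim (use abs_ge_self[of M0] in \<open>simp add: M_def\<close>)
  have M: "M \<ge> 0" "\<And>k. AE t in lebesgue_on {0..T}. norm (uk k t) \<le> M"
    using M1 by (auto simp: M_def)
  define Mx where "Mx = max_hist \<tau> x"
  have cMx: "continuous_on {0..T} Mx" using max_hist_cont[OF tau_pos cx] by (simp add: Mx_def)
  obtain LF1 where LF1: "LF1-lipschitz_on UNIV (\<lambda>p. F1 (fst p) (snd p))"
    using F1_lip unfolding globally_lipschitz_def by blast
  have cF1: "continuous_on UNIV (\<lambda>p. F1 (fst p) (snd p))" by (rule lipschitz_on_continuous_on[OF LF1])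
  define A where "A s = F1 (x s) (Mx s)" for s
  have cA: "continuous_on {0..T} A"
  proof -
    have "continuous_on {0..T} (\<lambda>s. (x s, Mx s))"
      by (intro continuous_on_Pair continuous_on_subset[OF cx] cMx) (use tau_pos in auto)
    from continuous_on_compose2[OF cF1 this] show ?thesis by (simp add: A_def)
  qed
  have "bounded (A ` {0..T})" by (intro compact_imp_bounded compact_continuous_image cA) simp
  then obtain B where B: "B > 0" "\<And>s. s \<in> {0..T} \<Longrightarrow> norm (A s) \<le> B"
    unfolding bounded_pos by blast
  define nn where "nn = real CARD('n)"
  have nn: "nn > 0" by (simp add: nn_def)
  have Ameas: "A \<in> borel_measurable (lebesgue_on {0..T})"
    by (rule continuous_imp_measurable_on_sets_lebesgue[OF cA]) simp
  have umeas: "u \<in> borel_measurable (lebesgue_on {0..T})"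
    using u_int by (rule borel_measurable_integrable)
  have Auk_meas: "(\<lambda>s. A s *v uk k s) \<in> borel_measurable (lebesgue_on {0..T})" for k
    using borel_measurable_bilinear[OF bilinear_mv Ameas uk_meas[of k]] by simp
  have Au_meas: "(\<lambda>s. A s *v u s) \<in> borel_measurable (lebesgue_on {0..T})"
    using borel_measurable_bilinear[OF bilinear_mv Ameas umeas] by simp
  have cint: "integrable (lebesgue_on {0..T}) (\<lambda>s. c)" for c :: real
    by (rule continuous_imp_integrable_real) (rule continuous_on_const)
  have Auk_int: "integrable (lebesgue_on {0..T}) (\<lambda>s. A s *v uk k s)" for k
  proof (rule Bochner_Integration.integrable_bound[OF cint[of "nn * B * M"] Auk_meas])
    show "AE s in lebesgue_on {0..T}. norm (A s *v uk k s) \<le> norm (nn * B * M)"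
      using AE_space M(2)[of k]
    proof eventually_elim
      case (elim s)
      have "norm (A s *v uk k s) \<le> nn * norm (A s) * norm (uk k s)" unfolding nn_def by (rule norm_mv_le)
      also have "\<dots> \<le> nn * B * M"
        using elim B M(1) nn by (intro mult_mono mult_left_mono) auto
      finally show ?case using nn B M(1) by simp
    qed
  qed
  have nu_int: "integrable (lebesgue_on {0..T}) (\<lambda>s. nn * B * norm (u s))"
    using u_int by (intro integrable_mult_right integrable_norm)
  have Au_int: "integrable (lebesgue_on {0..T}) (\<lambda>s. A s *v u s)"
  proof (rule Bochner_Integration.integrable_bound[OF nu_int Au_meas])
    show "AE s in lebesgue_on {0..T}. norm (A s *v u s) \<le> norm (nn * B * norm (u s))"
      using AE_space
    proof eventually_elim
      case (elim s)
      have "norm (A s *v u s) \<le> nn * norm (A s) * norm (u s)" unfolding nn_def by (rule norm_mv_le)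
      also have "\<dots> \<le> nn * B * norm (u s)"
        using elim B nn by (intro mult_right_mono mult_left_mono) auto
      finally show ?case using nn B by simp
    qed
  qed
  define P where "P k s = A s *v uk k s - A s *v u s" for k s
  have Pint: "integrable (lebesgue_on {0..T}) (P k)" for k
    unfolding P_def using Auk_int Au_int by (rule Bochner_Integration.integrable_diff)
  define v where "v s = nn * B * (M + norm (u s))" for s
  have vint: "integrable (lebesgue_on {0..T}) v"
    unfolding v_def distrib_left using cint nu_int by (intro Bochner_Integration.integrable_add) auto
  have Pbound: "AE s in lebesgue_on {0..T}. norm (P k s) \<le> v s" for k
    using AE_space M(2)[of k]
  proof eventually_elim
    case (elim s)
    have "P k s = A s *v (uk k s - u s)" by (simp add: P_def matrix_vector_mult_diff_distrib)
    then have "norm (P k s) \<le> nn * norm (A s) * norm (uk k s - u s)" unfolding nn_def by (simp only: norm_mv_le)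
    also have "\<dots> \<le> nn * B * (M + norm (u s))"
    proof (intro mult_mono mult_left_mono)
      show "norm (uk k s - u s) \<le> M + norm (u s)" using elim norm_triangle_ineq4[of "uk k s" "u s"] by simp
    qed (use elim B nn M(1) in auto)
    finally show ?case by (simp add: v_def)
  qed
  define r where "r k t = integral\<^sup>L (lebesgue_on {0..t}) (P k)" for k t
  define V where "V t = integral\<^sup>L (lebesgue_on {0..t}) v" for t
  have cV: "continuous_on {0..T} V"
  proof -
    have eqV: "integral {0..t} v = V t" if "t \<in> {0..T}" for t
    proof -
      have "integrable (lebesgue_on {0..t}) v"
        using that by (intro Equivalence_Lebesgue_Henstock_Integration.integrable_subinterval[OF vint]) auto
      then show ?thesis unfolding V_def by (rule bochner_hk[symmetric])
    qed
    have cI: "continuous_on {0..T} (\<lambda>t. integral {0..t} v)"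
      by (intro indefinite_integral_continuous_1 integrable_on_lebesgue_on[OF vint]) simp
    show ?thesis by (rule continuous_on_eq[OF cI eqV])
  qed
  have req1: "norm (r k t - r k s) \<le> V t - V s" if st: "0 \<le> s" "s \<le> t" "t \<le> T" for k s t
  proof -
    have Pt: "integrable (lebesgue_on {0..t}) (P k)"
      using st by (intro Equivalence_Lebesgue_Henstock_Integration.integrable_subinterval[OF Pint]) auto
    have vt: "integrable (lebesgue_on {0..t}) v"
      using st by (intro Equivalence_Lebesgue_Henstock_Integration.integrable_subinterval[OF vint]) auto
    have Pst: "integrable (lebesgue_on {s..t}) (P k)"
      using st by (intro Equivalence_Lebesgue_Henstock_Integration.integrable_subinterval[OF Pint]) auto
    have vst: "integrable (lebesgue_on {s..t}) v"
      using st by (intro Equivalence_Lebesgue_Henstock_Integration.integrable_subinterval[OF vint]) auto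
    have "r k t - r k s = integral\<^sup>L (lebesgue_on {s..t}) (P k)"
      unfolding r_def using Equivalence_Measurable_On_Borel.integral_combine[OF Pt, of s] st by simp
    moreover have "V t - V s = integral\<^sup>L (lebesgue_on {s..t}) v"
      unfolding V_def using Equivalence_Measurable_On_Borel.integral_combine[OF vt, of s] st by simp
    moreover have "norm (integral\<^sup>L (lebesgue_on {s..t}) (P k)) \<le> integral\<^sup>L (lebesgue_on {s..t}) v"
    proof -
      have "norm (integral\<^sup>L (lebesgue_on {s..t}) (P k)) \<le> integral\<^sup>L (lebesgue_on {s..t}) (\<lambda>\<sigma>. norm (P k \<sigma>))"
        by (rule integral_norm_bound)
      also have "\<dots> \<le> integral\<^sup>L (lebesgue_on {s..t}) v"
        using Pst vst by (intro integral_mono_AE integrable_norm ae_sub[OF Pbound]) (use st in auto)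
      finally show ?thesis .
    qed
    ultimately show ?thesis by simp
  qed
  have req: "norm (r k s - r k t) \<le> \<bar>V s - V t\<bar>" if "s \<in> {0..T}" "t \<in> {0..T}" for k s t
  proof (cases "s \<le> t")
    case True
    then show ?thesis using req1[of s t k] that by (simp add: norm_minus_commute)
  next
    case False
    then show ?thesis using req1[of t s k] that by simp
  qed
  have rpt: "(\<lambda>k. r k t) \<longlonglongrightarrow> 0" if t: "t \<in> {0..T}" for t
  proof -
    have sub: "{0..t} \<subseteq> {0..T}" using t by auto
    have Aukt: "integrable (lebesgue_on {0..t}) (\<lambda>s. A s *v uk k s)" for k
      by (rule Equivalence_Lebesgue_Henstock_Integration.integrable_subinterval[OF Auk_int sub])
    have Aut: "integrable (lebesgue_on {0..t}) (\<lambda>s. A s *v u s)"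
      by (rule Equivalence_Lebesgue_Henstock_Integration.integrable_subinterval[OF Au_int sub])
    have rq: "r k t = integral\<^sup>L (lebesgue_on {0..t}) (\<lambda>s. A s *v uk k s) - integral\<^sup>L (lebesgue_on {0..t}) (\<lambda>s. A s *v u s)" for k
      unfolding r_def P_def by (rule Bochner_Integration.integral_diff[OF Aukt Aut])
    have comp: "(\<lambda>k. integral\<^sup>L (lebesgue_on {0..t}) (\<lambda>s. A s *v uk k s) $ i) \<longlonglongrightarrow> integral\<^sup>L (lebesgue_on {0..t}) (\<lambda>s. A s *v u s) $ i" for i
    proof -
      define g where "g s = indicator {0..t} s *\<^sub>R (A s $ i)" for s
      have gmeas: "g \<in> borel_measurable (lebesgue_on {0..T})"
      proof -
        have "(\<lambda>s. A s $ i) \<in> borel_measurable (lebesgue_on {0..T})"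
          by (rule continuous_imp_measurable_on_sets_lebesgue) (use cA in \<open>auto intro: continuous_intros\<close>)
        then show ?thesis unfolding g_def using ind_meas[OF t] by (intro borel_measurable_scaleR)
      qed
      have gbd: "\<exists>B. AE s in lebesgue_on {0..T}. norm (g s) \<le> B"
      proof (intro exI[of _ B])
        show "AE s in lebesgue_on {0..T}. norm (g s) \<le> B" using AE_space
        proof eventually_elim
          case (elim s)
          have "norm (g s) \<le> norm (A s $ i)" by (simp add: g_def indicator_def)
          also have "\<dots> \<le> norm (A s)" by (rule Finite_Cartesian_Product.norm_nth_le)
          also have "\<dots> \<le> B" using B(2) elim by simp
          finally show ?case .
        qed
      qed
      have key: "integral\<^sup>L (lebesgue_on {0..t}) (\<lambda>s. A s *v w s) $ i = integral\<^sup>L (lebesgue_on {0..T}) (\<lambda>s. w s \<bullet> g s)"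
        if wint: "integrable (lebesgue_on {0..t}) (\<lambda>s. A s *v w s)" for w
      proof -
        have "integral\<^sup>L (lebesgue_on {0..t}) (\<lambda>s. A s *v w s) $ i = integral\<^sup>L (lebesgue_on {0..t}) (\<lambda>s. (A s *v w s) $ i)"
          by (rule integral_bounded_linear[OF bounded_linear_vec_nth wint, symmetric])
        also have "\<dots> = integral\<^sup>L (lebesgue_on {0..t}) (\<lambda>s. w s \<bullet> (A s $ i))" by (simp add: mv_component)
        also have "\<dots> = integral\<^sup>L (lebesgue_on {0..T}) (\<lambda>s. indicator {0..t} s * (w s \<bullet> (A s $ i)))"
          by (rule restrict_int[OF t])
        also have "\<dots> = integral\<^sup>L (lebesgue_on {0..T}) (\<lambda>s. w s \<bullet> g s)" by (simp add: g_def)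
        finally show ?thesis .
      qed
      have "(\<lambda>k. integral\<^sup>L (lebesgue_on {0..T}) (\<lambda>s. uk k s \<bullet> g s)) \<longlonglongrightarrow> integral\<^sup>L (lebesgue_on {0..T}) (\<lambda>s. u s \<bullet> g s)"
        by (rule weak[OF gmeas gbd])
      then show ?thesis using key[OF Aukt] key[OF Aut] by simp
    qed
    have "(\<lambda>k. integral\<^sup>L (lebesgue_on {0..t}) (\<lambda>s. A s *v uk k s)) \<longlonglongrightarrow> integral\<^sup>L (lebesgue_on {0..t}) (\<lambda>s. A s *v u s)"
      by (rule vec_tendstoI) (rule comp)
    then have "(\<lambda>k. integral\<^sup>L (lebesgue_on {0..t}) (\<lambda>s. A s *v uk k s) - integral\<^sup>L (lebesgue_on {0..t}) (\<lambda>s. A s *v u s)) \<longlonglongrightarrow> 0"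
      by (rule LIM_zero)
    then show ?thesis by (simp only: rq)
  qed
  have unif_r: "\<exists>K. \<forall>k\<ge>K. \<forall>t\<in>{0..T}. norm (r k t) \<le> \<epsilon>" if "\<epsilon> > 0" for \<epsilon>
    by (rule equi_unif[OF cV req rpt that])
  define C0 where "C0 = L0 + nn * L1 * M"
  define C' where "C' = C0 * (1 + nn)"
  define lam where "lam = 2 * C' + 1"
  have C0: "C0 \<ge> 0" using L0 L1 M nn by (simp add: C0_def)
  have C': "C' \<ge> 0" using C0 nn by (simp add: C'_def)
  have lam: "lam > 0" "2 * C' \<le> lam" using C' by (auto simp: lam_def)
  have T0: "T \<ge> 0" using T_pos by simp
  show ?thesis
    unfolding uniform_limit_iff
  proof (intro allI impI)
    fix \<epsilon> :: real assume eps: "\<epsilon> > 0"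
    define Q where "Q = 4 * (C0 * T + 1) * exp (lam * T)"
    have Q: "Q > 0" using C0 T0 by (simp add: Q_def add_nonneg_pos)
    define e' where "e' = \<epsilon> / Q"
    have e': "e' > 0" using eps Q by (simp add: e'_def)
    obtain K1 where K1: "\<And>k t. k \<ge> K1 \<Longrightarrow> t \<in> {0..T} \<Longrightarrow> norm (LIE k \<tau> x t - max_hist \<tau> x t) \<le> e'"
      using LIE_max[OF tau_pos cx e'] by blast
    obtain K2 where K2: "\<And>k t. k \<ge> K2 \<Longrightarrow> t \<in> {0..T} \<Longrightarrow> norm (r k t) \<le> e'"
      using unif_r[OF e'] by blast
    show "\<forall>\<^sub>F k in sequentially. \<forall>t\<in>{0..T}. dist (xk k t) (x t) < \<epsilon>"
      unfolding eventually_sequentially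
    proof (intro exI[of _ "max (max K1 K2) 1"] allI impI ballI)
      fix k t assume k: "max (max K1 K2) 1 \<le> k" and t: "t \<in> {0..T}"
      have k1: "k \<ge> 1" "k \<ge> K1" "k \<ge> K2" using k by auto
      note ks = xk_sol[OF k1(1), unfolded dde_solution_def]
      have cxk: "continuous_on {-\<tau>..T} (xk k)" using ks by blast
      have xkphi: "\<And>t. t \<in> {-\<tau>..0} \<Longrightarrow> xk k t = \<phi> t" using ks by blast
      obtain Lk where Lk: "Lk-lipschitz_on {0..T} (xk k)" using ks by blast
      define Gk where "Gk s = F0 (xk k s) (LIE k \<tau> (xk k) s) + F1 (xk k s) (LIE k \<tau> (xk k) s) *v uk k s" for s
      define G where "G s = F0 (x s) (Mx s) + F1 (x s) (Mx s) *v u s" for s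
      have derk: "AE t in lebesgue_on {0..T}. (xk k has_vector_derivative Gk t) (at t)"
        using ks unfolding Gk_def by blast
      have derx': "AE t in lebesgue_on {0..T}. (x has_vector_derivative G t) (at t)"
        using derx unfolding G_def Mx_def by blast
      define e where "e s = norm (xk k s - x s)" for s
      have ce: "continuous_on {0..T} e" unfolding e_def
        using continuous_on_subset[OF cxk] continuous_on_subset[OF cx] tau_pos
        by (intro continuous_intros) auto
      have e0: "e s = 0" if "s \<in> {-\<tau>..0}" for s using xkphi[OF that] xphi[OF that] by (simp add: e_def)
      have cwe: "continuous_on {0..T} (\<lambda>s. exp (- lam * s) * e s)" by (intro continuous_intros ce)
      have "\<exists>s1\<in>{0..T}. \<forall>s\<in>{0..T}. exp (- lam * s) * e s \<le> exp (- lam * s1) * e s1"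
        by (rule continuous_attains_sup[OF compact_Icc _ cwe]) (use T0 in simp)
      then obtain s1 where s1: "s1 \<in> {0..T}" "\<forall>s\<in>{0..T}. exp (- lam * s) * e s \<le> exp (- lam * s1) * e s1"
        by blast
      define W where "W = exp (- lam * s1) * e s1"
      have W0: "W \<ge> 0" by (simp add: W_def e_def)
      have eW: "e s \<le> W * exp (lam * s)" if "s \<in> {0..T}" for s
      proof -
        have h: "exp (- lam * s) * e s \<le> W" using s1(2) that by (simp add: W_def)
        have ex1: "exp (- lam * s) * exp (lam * s) = 1" by (simp add: exp_add[symmetric])
        have "e s = e s * (exp (- lam * s) * exp (lam * s))" using ex1 by simp
        also have "\<dots> = (exp (- lam * s) * e s) * exp (lam * s)" by (simp only: ac_simps)
        also have "\<dots> \<le> W * exp (lam * s)" by (rule mult_right_mono[OF h]) simp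
        finally show ?thesis .
      qed
      have eW2: "norm (xk k \<sigma> - x \<sigma>) \<le> W * exp (lam * s)" if s: "s \<in> {0..T}" and \<sigma>: "\<sigma> \<in> {s-\<tau>..s}" for \<sigma> s
      proof (cases "\<sigma> < 0")
        case True
        then have "\<sigma> \<in> {-\<tau>..0}" using s \<sigma> by auto
        then show ?thesis using e0 W0 by (simp add: e_def)
      next
        case False
        then have "\<sigma> \<in> {0..T}" using s \<sigma> by auto
        then have "e \<sigma> \<le> W * exp (lam * \<sigma>)" by (rule eW)
        also have "\<dots> \<le> W * exp (lam * s)" using W0 lam \<sigma> by (intro mult_left_mono) auto
        finally show ?thesis by (simp add: e_def)
      qed
      have ftck: "integrable (lebesgue_on {0..s1}) Gk \<and> integral\<^sup>L (lebesgue_on {0..s1}) Gk = xk k s1 - xk k 0"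
        by (rule lip_ftc[OF Lk derk s1(1)])
      have ftcx: "integrable (lebesgue_on {0..s1}) G \<and> integral\<^sup>L (lebesgue_on {0..s1}) G = x s1 - x 0"
        by (rule lip_ftc[OF Lx derx' s1(1)])
      have x00: "xk k 0 = x 0" using xkphi[of 0] xphi[of 0] tau_pos by simp
      have Ps1: "integrable (lebesgue_on {0..s1}) (P k)"
        using s1(1) by (intro Equivalence_Lebesgue_Henstock_Integration.integrable_subinterval[OF Pint]) auto
      define H where "H s = Gk s - G s - P k s" for s
      have GG: "integrable (lebesgue_on {0..s1}) (\<lambda>s. Gk s - G s)"
        using ftck ftcx by (intro Bochner_Integration.integrable_diff) auto
      have Hint: "integrable (lebesgue_on {0..s1}) H"
        unfolding H_def using GG Ps1 by (rule Bochner_Integration.integrable_diff)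
      have diff: "xk k s1 - x s1 = integral\<^sup>L (lebesgue_on {0..s1}) H + r k s1"
      proof -
        have "integral\<^sup>L (lebesgue_on {0..s1}) H = integral\<^sup>L (lebesgue_on {0..s1}) (\<lambda>s. Gk s - G s) - r k s1"
          unfolding H_def r_def by (rule Bochner_Integration.integral_diff[OF GG Ps1])
        also have "integral\<^sup>L (lebesgue_on {0..s1}) (\<lambda>s. Gk s - G s) = (xk k s1 - xk k 0) - (x s1 - x 0)"
          using ftck ftcx by (subst Bochner_Integration.integral_diff) auto
        finally show ?thesis using x00 by simp
      qed
      have sub1: "{0..s1} \<subseteq> {0..T}" using s1(1) by auto
      have Hbd: "AE s in lebesgue_on {0..s1}. norm (H s) \<le> C' * W * exp (lam * s) + C0 * e'"
        using ae_sub[OF M(2)[of k] sub1] AE_space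
      proof eventually_elim
        case (elim s)
        have sT: "s \<in> {0..T}" using elim s1(1) by auto
        define D where "D = F1 (xk k s) (LIE k \<tau> (xk k) s) - F1 (x s) (Mx s)"
        define a1 where "a1 = F0 (xk k s) (LIE k \<tau> (xk k) s) - F0 (x s) (Mx s)"
        have Hs: "H s = a1 + D *v uk k s"
          unfolding H_def Gk_def G_def P_def A_def a1_def D_def by (simp add: algebra_simps)
        define dL where "dL = norm (LIE k \<tau> (xk k) s - Mx s)"
        have win: "{s-\<tau>..s} \<subseteq> {-\<tau>..T}" using sT by auto
        have l1: "norm (LIE k \<tau> (xk k) s - LIE k \<tau> x s) \<le> nn * (W * exp (lam * s))"
          unfolding nn_def
          by (rule LIE_lip[OF k1(1) tau_pos continuous_on_subset[OF cxk win] continuous_on_subset[OF cx win]])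
             (rule eW2[OF sT])
        have l2: "norm (LIE k \<tau> x s - Mx s) \<le> e'" unfolding Mx_def by (rule K1[OF k1(2) sT])
        have dLb: "dL \<le> nn * (W * exp (lam * s)) + e'"
          unfolding dL_def by (rule norm_diff_triangle_le[OF l1 l2])
        have es: "e s \<le> W * exp (lam * s)" by (rule eW[OF sT])
        have na1: "norm a1 \<le> L0 * (e s + dL)" unfolding a1_def e_def dL_def by (rule L0(2))
        have nD: "norm D \<le> L1 * (e s + dL)" unfolding D_def e_def dL_def by (rule L1(2))
        have "norm (D *v uk k s) \<le> nn * norm D * norm (uk k s)" unfolding nn_def by (rule norm_mv_le)
        also have "\<dots> \<le> nn * (L1 * (e s + dL)) * M"
          using nD elim nn M(1) L1(1) by (intro mult_mono mult_left_mono) (auto simp: e_def dL_def)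
        finally have nDu: "norm (D *v uk k s) \<le> nn * (L1 * (e s + dL)) * M" .
        have "norm (H s) \<le> norm a1 + norm (D *v uk k s)" unfolding Hs by (rule norm_triangle_ineq)
        also have "\<dots> \<le> L0 * (e s + dL) + nn * (L1 * (e s + dL)) * M" using na1 nDu by linarith
        also have "\<dots> = C0 * (e s + dL)" by (simp add: C0_def algebra_simps)
        also have "\<dots> \<le> C0 * (W * exp (lam * s) + nn * (W * exp (lam * s)) + e')"
          using es dLb C0 by (intro mult_left_mono) auto
        also have "\<dots> = C' * W * exp (lam * s) + C0 * e'" by (simp add: C'_def algebra_simps)
        finally show ?case .
      qed
      have bcont: "continuous_on {0..s1} (\<lambda>s. C' * W * exp (lam * s) + C0 * e')"
        by (intro continuous_intros)
      have bint: "integrable (lebesgue_on {0..s1}) (\<lambda>s. C' * W * exp (lam * s) + C0 * e')"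
        by (rule continuous_imp_integrable_real[OF bcont])
      have ival: "integral\<^sup>L (lebesgue_on {0..s1}) (\<lambda>s. C' * W * exp (lam * s) + C0 * e') = C' * W * (exp (lam * s1) - 1) / lam + C0 * e' * s1"
      proof -
        have "((\<lambda>s. C' * W * exp (lam * s) + C0 * e') has_integral
               ((C' * W * exp (lam * s1) / lam + C0 * e' * s1) - (C' * W * exp (lam * 0) / lam + C0 * e' * 0))) {0..s1}"
        proof (rule fundamental_theorem_of_calculus)
          show "0 \<le> s1" using s1(1) by simp
          fix s assume "s \<in> {0..s1}"
          have "((\<lambda>s. C' * W * exp (lam * s) / lam + C0 * e' * s) has_real_derivative (C' * W * exp (lam * s) + C0 * e')) (at s within {0..s1})"
            using lam(1) by (auto intro!: derivative_eq_intros)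
          then show "((\<lambda>s. C' * W * exp (lam * s) / lam + C0 * e' * s) has_vector_derivative (C' * W * exp (lam * s) + C0 * e')) (at s within {0..s1})"
            by (simp add: has_real_derivative_iff_has_vector_derivative)
        qed
        then have "integral {0..s1} (\<lambda>s. C' * W * exp (lam * s) + C0 * e') = C' * W * (exp (lam * s1) - 1) / lam + C0 * e' * s1"
          by (simp add: integral_unique diff_divide_distrib right_diff_distrib)
        then show ?thesis using bochner_hk[OF bint] by simp
      qed
      have "e s1 \<le> norm (integral\<^sup>L (lebesgue_on {0..s1}) H) + norm (r k s1)"
        unfolding e_def diff by (rule norm_triangle_ineq)
      also have "norm (integral\<^sup>L (lebesgue_on {0..s1}) H) \<le> integral\<^sup>L (lebesgue_on {0..s1}) (\<lambda>s. norm (H s))"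
        by (rule integral_norm_bound)
      also have "\<dots> \<le> integral\<^sup>L (lebesgue_on {0..s1}) (\<lambda>s. C' * W * exp (lam * s) + C0 * e')"
        by (rule integral_mono_AE[OF integrable_norm[OF Hint] bint Hbd])
      also have "norm (r k s1) \<le> e'" by (rule K2[OF k1(3) s1(1)])
      finally have es1: "e s1 \<le> C' * W * (exp (lam * s1) - 1) / lam + (C0 * e' * s1 + e')"
        unfolding ival by simp
      have Wb: "W \<le> 2 * (C0 * e' * s1 + e')"
      proof (rule final_arith[OF lam(1) C' lam(2) W0 _ _ es1])
        show "1 \<le> exp (lam * s1)" using lam s1(1) by simp
        have ex1: "exp (- lam * s1) * exp (lam * s1) = 1" by (simp add: exp_add[symmetric])
        have "e s1 = e s1 * (exp (- lam * s1) * exp (lam * s1))" using ex1 by simp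
        also have "\<dots> = W * exp (lam * s1)" unfolding W_def by (simp only: ac_simps)
        finally show "e s1 = W * exp (lam * s1)" .
      qed
      have "C0 * e' * s1 \<le> C0 * e' * T" using C0 e' s1(1) by (intro mult_left_mono) auto
      then have Wb2: "W \<le> 2 * (C0 * T + 1) * e'" using Wb by (simp add: algebra_simps)
      have "dist (xk k t) (x t) = e t" by (simp add: e_def dist_norm)
      also have "\<dots> \<le> W * exp (lam * t)" by (rule eW[OF t])
      also have "\<dots> \<le> (2 * (C0 * T + 1) * e') * exp (lam * T)"
        using Wb2 W0 lam t by (intro mult_mono) auto
      also have "\<dots> = \<epsilon> / 2" using Q C0 T0 by (simp add: e'_def Q_def field_simps)
      also have "\<dots> < \<epsilon>" using eps by simp
      finally show "dist (xk k t) (x t) < \<epsilon>" .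
    qed
  qed
qed

end
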